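(* For every integer $k \ge 1$, \[ \pi = 2^{k+1}\, i \sum_{m=1}^{\infty} \frac{1}{2m-1}\left( \frac{1}{\left(1 + 2i\, a_k/\sqrt{2 - a_{k-1}}\right)^{2m-1}} - \frac{1}{\left(1 - 2i\, a_k/\sqrt{2 - a_{k-1}}\right)^{2m-1}} \right), \] where the series converges.
   Context: Here $i$ is the imaginary unit. The nested radicals $a_k$ are defined by $a_0 = 0$ and $a_k = \sqrt{2 + a_{k-1}}$ for $k \ge 1$. Thus $a_1 = \sqrt{2}$, and in general $a_k = \sqrt{2+\sqrt{2+\cdots+\sqrt{2}}}$ with $k$ square roots. *)

theory Defs
  imports "HOL-Analysis.Analysis"
begin

fun nested_rad :: "nat \<Rightarrow> real" where
  "nested_rad 0 = 0"
| "nested_rad (Suc k) = sqrt (2 + nested_rad k)"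

end

theory Submission
  imports Defs
begin

lemma theta_pos: "0 < (pi/2) / 2^(k+1)" "(pi/2) / 2^(k+1) < pi/2"
proof -
  show "0 < (pi/2) / 2^(k+1)" by simp
  have "1 < (2::real)^(k+1)" by (rule one_less_power) auto
  moreover have "0 < pi/2" by simp
  ultimately show "(pi/2) / 2^(k+1) < pi/2" by (simp add: divide_less_eq)
qed

lemma rad_cos: "nested_rad k = 2 * cos (pi / 2^(k+1))"
proof (induction k)
  case 0
  then show ?case by simp
next
  case (Suc k)
  define t where "t = pi / 2^(k+2)"
  have e: "pi / 2^(k+1) = 2*t" unfolding t_def by (simp add: field_simps)
  have c: "cos t > 0" using theta_pos[of k] unfolding t_def
    by (intro cos_gt_zero) (auto simp: field_simps)
  have "nested_rad (Suc k) = sqrt (2 + 2*cos (2*t))" using Suc e by simp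
  also have "2 + 2*cos(2*t) = (2*cos t)^2" by (simp add: cos_double_cos power2_eq_square)
  also have "sqrt ((2*cos t)^2) = 2*cos t" using c by (simp add: real_sqrt_mult)
  finally show ?case unfolding t_def by (simp add: numeral_eq_Suc)
qed

lemma rad_sin: assumes "k \<ge> 1" shows "sqrt (2 - nested_rad (k-1)) = 2 * sin (pi / 2^(k+1))"
proof -
  define t where "t = pi / 2^(k+1)"
  have e: "pi / 2^k = 2*t" unfolding t_def by (simp add: field_simps)
  have hs: "sin t > 0" using theta_pos[of k] unfolding t_def
    by (intro sin_gt_zero) (auto simp: field_simps)
  have "nested_rad (k-1) = 2*cos(2*t)" using rad_cos[of "k-1"] assms e by simp
  hence "2 - nested_rad (k-1) = (2 * sin t)^2" by (simp add: cos_double_sin power2_eq_square)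
  then show ?thesis using hs unfolding t_def by (simp add: real_sqrt_mult)
qed

lemma aux: fixes s c z Z :: complex assumes h: "s * s = 1"
  shows "\<i>*(s/c*((-\<i>*z)*(s * Z))) = z*Z/c"
proof -
  have "\<i>*(s/c*((-\<i>*z)*(s * Z))) = (\<i>*(-\<i>))*(s * s)*(z*Z)/c" by (simp only: ac_simps times_divide_eq_left times_divide_eq_right)
  also have "\<dots> = z*Z/c" using h by simp
  finally show ?thesis .
qed

lemma odd_series: assumes "norm (z::complex) < 1"
  shows "(\<lambda>n. z^(2*n+1) / of_nat (2*n+1)) sums (\<i> * Arctan (-\<i>*z))"
proof -
  have "norm (-\<i>*z) < 1" using assms by (simp add: norm_mult)
  from sums_mult[OF Arctan_series(2)[OF this], of \<i>]
  have A: "(\<lambda>n. \<i> * ((-1)^n / of_nat (2*n+1) * (-\<i>*z)^(2*n+1))) sums (\<i> * Arctan (-\<i>*z))" by simp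
  have "\<i> * ((-1)^n / of_nat (2*n+1) * (-\<i>*z)^(2*n+1)) = z^(2*n+1) / of_nat (2*n+1)" for n
  proof -
    have "(-\<i>*z)^(2*n) = ((-\<i>*z)^2)^n" by (simp add: power_mult)
    also have "(-\<i>*z)^2 = (-1) * z^2" by (simp add: power_mult_distrib)
    also have "((-1) * z^2)^n = (-1)^n * (z^2)^n" by (rule power_mult_distrib)
    also have "(z^2)^n = z^(2*n)" by (simp add: power_mult)
    finally have p2: "(-\<i>*z)^(2*n) = (-1)^n * z^(2*n)" .
    have P: "(-\<i>*z)^(2*n+1) = (-\<i>*z) * ((-1)^n * z^(2*n))"
      by (metis Suc_eq_plus1 power_Suc p2)
    have Z: "z^(2*n+1) = z * z^(2*n)" by (metis Suc_eq_plus1 power_Suc)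
    have s1: "((-1::complex)^n) * (-1)^n = 1" by (simp add: power_mult_distrib[symmetric])
    show ?thesis unfolding P Z by (rule aux[OF s1])
  qed
  with A show ?thesis by simp
qed

lemma half_arctan:
  fixes xr :: real
  assumes "z = 1 / (1 + 2 * \<i> * complex_of_real xr)"
  shows "\<i> * Arctan (-\<i>*z) = -(1/2) * Ln (Complex (xr^2/(1+xr^2)) (xr/(1+xr^2)))"
proof -
  define a where "a = 1 + 2 * \<i> * complex_of_real xr"
  have a0: "a \<noteq> 0" "a + 1 \<noteq> 0" unfolding a_def by (auto simp: complex_eq_iff)
  have z: "z = 1 / a" using assms(1) unfolding a_def .
  have h1: "1 - 1/a = (a-1)/a" "1 + 1/a = (a+1)/a" using a0 by (auto simp: field_simps)
  have "(1 - z)/(1 + z) = (a - 1)/(a + 1)" using a0 unfolding z h1 by simp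
  also have "\<dots> = Complex (xr^2/(1+xr^2)) (xr/(1+xr^2))"
  proof -
    have p: "1 + xr*xr \<noteq> 0" by (smt (verit) zero_le_square)
    have "Complex (xr^2/(1+xr^2)) (xr/(1+xr^2)) * (a + 1) = a - 1"
    proof -
      have h0: "xr * xr * (2 * xr) + xr * 2 = (2*xr)*(1+xr*xr)" by (simp add: algebra_simps)
      have "xr * xr * (2 * xr) / (1 + xr * xr) + xr * 2 / (1 + xr * xr) = (xr * xr * (2 * xr) + xr * 2)/(1+xr*xr)"
        by (simp add: add_divide_distrib)
      also have "\<dots> = 2*xr" unfolding h0 using p by simp
      finally have h: "xr * xr * (2 * xr) / (1 + xr * xr) + xr * 2 / (1 + xr * xr) = 2 * xr" .
      show ?thesis unfolding a_def using h by (simp add: complex_eq_iff power2_eq_square)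
    qed
    then show ?thesis using a0 by (simp add: field_simps)
  qed
  finally have q: "(1 - z)/(1 + z) = Complex (xr^2/(1+xr^2)) (xr/(1+xr^2))" .
  have "\<i> * Arctan (-\<i>*z) = \<i> * (\<i>/2) * Ln((1 - z) / (1 + z))"
    by (simp add: Arctan_def)
  then show ?thesis using q by simp
qed

lemma norm_a: assumes "xr \<noteq> 0" shows "norm (1 / (1 + 2 * \<i> * complex_of_real xr)) < 1"
proof -
  have "norm (1 + 2 * \<i> * complex_of_real xr) = sqrt (1 + 4*xr^2)"
    by (simp add: cmod_def power2_eq_square)
  also have "1 < sqrt (1 + 4*xr^2)" using assms by simp
  finally show ?thesis by (simp add: norm_divide divide_less_eq)
qed

lemma dd: "(1/(c::complex))*(A-B) = A/c - B/c" by (simp add: diff_divide_distrib)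

lemma ddiv: "(c::real) \<noteq> 0 \<Longrightarrow> (a/c)/(b/c) = a/b"
  by (cases "b=0") (simp_all add: field_simps)

lemma series_value:
  assumes xr: "0 < (xr::real)"
  shows "(\<lambda>n. let m = Suc n in
              (1 / of_nat (2 * m - 1)) *
              (1 / (1 + 2 * \<i> * complex_of_real xr) ^ (2 * m - 1) - 1 / (1 - 2 * \<i> * complex_of_real xr) ^ (2 * m - 1)))
         sums (-\<i> * complex_of_real (arctan (1/xr)))"
proof -
  define z where "z = 1 / (1 + 2 * \<i> * complex_of_real xr)"
  define w where "w = 1 / (1 + 2 * \<i> * complex_of_real (-xr))"
  have nz: "norm z < 1" unfolding z_def using xr norm_a[of xr] by simp
  have nw: "norm w < 1" unfolding w_def using xr norm_a[of "-xr"] by simp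
  have S: "(\<lambda>n. z^(2*n+1) / of_nat (2*n+1) - w^(2*n+1) / of_nat (2*n+1)) sums
           (\<i> * Arctan (-\<i>*z) - \<i> * Arctan (-\<i>*w))"
    by (intro sums_diff odd_series nz nw)
  have eq: "(\<lambda>n. let m = Suc n in
              (1 / of_nat (2 * m - 1)) *
              (1 / (1 + 2 * \<i> * complex_of_real xr) ^ (2 * m - 1) - 1 / (1 - 2 * \<i> * complex_of_real xr) ^ (2 * m - 1)))
        = (\<lambda>n. z^(2*n+1) / of_nat (2*n+1) - w^(2*n+1) / of_nat (2*n+1))"
  proof
    fix n
    have "2 * Suc n - 1 = 2*n+1" by simp
    have n1: "2 * Suc n - 1 = 2*n+1" by simp
    have m: "1 - 2 * \<i> * complex_of_real xr = 1 + 2 * \<i> * complex_of_real (-xr)" by simp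
      show "(let m = Suc n in
              (1 / of_nat (2 * m - 1)) *
              (1 / (1 + 2 * \<i> * complex_of_real xr) ^ (2 * m - 1) - 1 / (1 - 2 * \<i> * complex_of_real xr) ^ (2 * m - 1)))
        = z^(2*n+1) / of_nat (2*n+1) - w^(2*n+1) / of_nat (2*n+1)"
      unfolding Let_def n1 m z_def w_def power_one_over by (rule dd)
  qed
  define q where "q = Complex (xr^2/(1+xr^2)) (xr/(1+xr^2))"
  have hz: "\<i> * Arctan (-\<i>*z) = -(1/2) * Ln q" unfolding q_def
    by (rule half_arctan) (simp add: z_def)
  have hw: "\<i> * Arctan (-\<i>*w) = -(1/2) * Ln (cnj q)"
    unfolding q_def using half_arctan[of w "-xr"] by (simp add: w_def complex_cnj)
  have p: "0 < 1 + xr*xr" by (smt (verit) zero_le_square)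
  have Req: "Re q > 0" "Re (cnj q) > 0" unfolding q_def using xr p by (simp_all add: power2_eq_square)
  hence q0: "q \<noteq> 0" "cnj q \<noteq> 0" by auto
  have "Im q / Re q = (xr/(1+xr*xr))/(xr*xr/(1+xr*xr))" unfolding q_def by (simp add: power2_eq_square)
  also have "\<dots> = xr/(xr*xr)" using p by (intro ddiv) simp
  also have "\<dots> = 1/xr" using xr by simp
  finally have "Im q / Re q = 1/xr" .
  hence i1: "Im (Ln q) = arctan (1/xr)" using Im_Ln_eq[OF q0(1)] Req by simp
  have "Im (cnj q) / Re (cnj q) = - (Im q / Re q)" by simp
  hence "Im (cnj q) / Re (cnj q) = - (1/xr)" using \<open>Im q / Re q = 1/xr\<close> by simp
  hence i2: "Im (Ln (cnj q)) = - arctan (1/xr)" using Im_Ln_eq[OF q0(2)] Req by (simp add: arctan_minus)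
  have r: "Re (Ln q) = Re (Ln (cnj q))" using q0 by simp
  have "\<i> * Arctan (-\<i>*z) - \<i> * Arctan (-\<i>*w) = -\<i> * complex_of_real (arctan (1/xr))"
    unfolding hz hw using i1 i2 r by (simp add: complex_eq_iff)
  with S eq show ?thesis by simp
qed

theorem mainTheorem1:
  fixes k :: nat
  assumes "k \<ge> 1"
  defines "x \<equiv> complex_of_real (nested_rad k / sqrt (2 - nested_rad (k - 1)))"
  shows "\<exists>s. (\<lambda>n. let m = Suc n in
              (1 / of_nat (2 * m - 1)) *
              (1 / (1 + 2 * \<i> * x) ^ (2 * m - 1) - 1 / (1 - 2 * \<i> * x) ^ (2 * m - 1))) sums s
           \<and> complex_of_real pi = 2 ^ (k + 1) * \<i> * s"
proof -
  obtain j where kj: "k = Suc j" using assms by (cases k) auto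
  define t where "t = pi / 2^(k+1)"
  have t: "0 < t" "t < pi/2" using theta_pos[of j] unfolding t_def kj by (simp_all add: field_simps)
  have c: "cos t > 0" using t by (intro cos_gt_zero) auto
  have sn: "sin t > 0" using t by (intro sin_gt_zero) auto
  define xr where "xr = nested_rad k / sqrt (2 - nested_rad (k - 1))"
  have xr: "xr = cos t / sin t" unfolding xr_def rad_sin[OF assms(1)] rad_cos[of k] t_def by simp
  have xp: "0 < xr" using c sn xr by simp
  have "1/xr = tan t" using xr by (simp add: tan_def)
  hence at: "arctan (1/xr) = t" using t by (simp add: arctan_tan)
  have x: "x = complex_of_real xr" unfolding x_def xr_def ..
  have pt: "pi = 2^(k+1) * t" unfolding t_def by simp
  have g: "(2::complex)^(k+1)*\<i>*(-\<i>*c) = 2^(k+1)*c" for c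
  proof -
    have "(2::complex)^(k+1)*\<i>*(-\<i>*c) = 2^(k+1)*(\<i>*(-\<i>*c))" by (rule mult.assoc)
    also have "\<i>*(-\<i>*c) = c" by simp
    finally show ?thesis .
  qed
  have e: "complex_of_real pi = 2^(k+1)*\<i>*(-\<i>*complex_of_real (arctan(1/xr)))"
  proof -
    have "complex_of_real pi = complex_of_real (2^(k+1) * t)" by (simp only: pt)
    also have "\<dots> = 2^(k+1) * complex_of_real t" by simp
    also have "\<dots> = 2^(k+1)*\<i>*(-\<i>*complex_of_real (arctan(1/xr)))" by (simp only: g at)
    finally show ?thesis .
  qed
  show ?thesis unfolding x
  proof (intro exI conjI)
    show "(\<lambda>n. let m = Suc n in
              (1 / of_nat (2 * m - 1)) *
              (1 / (1 + 2 * \<i> * complex_of_real xr) ^ (2 * m - 1) - 1 / (1 - 2 * \<i> * complex_of_real xr) ^ (2 * m - 1)))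
         sums (-\<i> * complex_of_real (arctan (1/xr)))" by (rule series_value[OF xp])
    show "complex_of_real pi = 2^(k+1)*\<i>*(-\<i>*complex_of_real (arctan(1/xr)))" by (rule e)
  qed
qed

end
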